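(* Let $A\in\mathbb{C}^{p\times p}$ and $C\in\mathbb{C}^{q\times q}$ be Hermitian positive semidefinite, let $B\in\mathbb{C}^{p\times q}$, and let $H=\begin{bmatrix} A & B\\ B^* & -C\end{bmatrix}$. For every $t>0$, the null-space of $H$ coincides with the null-space of the matrix obtained from $H$ by replacing $A$ by $tA$; likewise for the matrix obtained by replacing $B$ by $tB$ (and $B^*$ by $tB^*$), and for the matrix obtained by replacing $C$ by $tC$. *)

theory Defs
  imports "Jordan_Normal_Form.Schur_Decomposition" "Jordan_Normal_Form.Matrix_Kernel"
begin

definition hermitian_mat :: "complex mat \<Rightarrow> bool" where
  "hermitian_mat A \<longleftrightarrow> dim_row A = dim_col A \<and>
     (\<forall>i < dim_row A. \<forall>j < dim_row A. A $$ (i, j) = cnj (A $$ (j, i)))"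

definition psd_mat :: "complex mat \<Rightarrow> bool" where
  "psd_mat A \<longleftrightarrow> hermitian_mat A \<and>
     (\<forall>v \<in> carrier_vec (dim_row A).
        0 \<le> Re (\<Sum>i < dim_row A. cnj (v $ i) * (A *\<^sub>v v) $ i))"

definition saddle_mat :: "complex mat \<Rightarrow> complex mat \<Rightarrow> complex mat \<Rightarrow> complex mat" where
  "saddle_mat A B C = four_block_mat A B (mat_adjoint B) (- C)"

end

theory Submission
  imports Defs
begin

lemma mv_idx:
  assumes "A \<in> carrier_mat n m" "x \<in> carrier_vec m" "i < n"
  shows "(A *\<^sub>v x) $ i = (\<Sum>j<m. A $$ (i,j) * x $ j)"
  using assms by (simp add: scalar_prod_def atLeast0LessThan)

lemma ab_zero:
  fixes a b :: real
  assumes "\<And>s. a * s + b * s^2 \<ge> 0"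
  shows "a = 0"
proof (rule ccontr)
  assume "a \<noteq> 0"
  define k where "k = 1 / (\<bar>b\<bar> + 1)"
  have k: "k > 0" "b * k < 1" unfolding k_def by (auto simp: field_simps)
  have "a * (- a * k) + b * (- a * k)^2 \<ge> 0" by (rule assms)
  moreover have "a * (- a * k) + b * (- a * k)^2 = a^2 * k * (b * k - 1)" by (simp add: power2_eq_square algebra_simps)
  ultimately have "a^2 * k * (b * k - 1) \<ge> 0" by simp
  moreover have "a^2 * k * (b * k - 1) < 0"
    using k \<open>a \<noteq> 0\<close> by (intro mult_pos_neg) auto
  ultimately show False by linarith
qed

lemma psd_null:
  assumes A: "A \<in> carrier_mat n n" and P: "psd_mat A" and x: "x \<in> carrier_vec n"
    and z: "Re (\<Sum>i<n. cnj (x $ i) * (A *\<^sub>v x) $ i) = 0"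
  shows "A *\<^sub>v x = 0\<^sub>v n"
proof -
  have hm: "hermitian_mat A" using P unfolding psd_mat_def by blast
  have dA: "dim_row A = n" using A by simp
  have herm: "\<And>i j. i < n \<Longrightarrow> j < n \<Longrightarrow> A $$ (i,j) = cnj (A $$ (j,i))"
    using hm unfolding hermitian_mat_def dA by blast
  have pos: "\<And>f. 0 \<le> Re (\<Sum>i<n. \<Sum>j<n. cnj (f i) * A $$ (i,j) * f j)"
  proof -
    fix f
    have "0 \<le> Re (\<Sum>i<n. cnj (vec n f $ i) * (A *\<^sub>v vec n f) $ i)"
      using P unfolding psd_mat_def dA by (metis vec_carrier)
    also have "(\<Sum>i<n. cnj (vec n f $ i) * (A *\<^sub>v vec n f) $ i) = (\<Sum>i<n. \<Sum>j<n. cnj (f i) * A $$ (i,j) * f j)"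
      using A by (auto simp: scalar_prod_def atLeast0LessThan sum_distrib_left mult.assoc intro!: sum.cong)
    finally show "0 \<le> Re (\<Sum>i<n. \<Sum>j<n. cnj (f i) * A $$ (i,j) * f j)" .
  qed
  define Q where "Q f g = (\<Sum>i<n. \<Sum>j<n. cnj (f i) * A $$ (i,j) * g j)" for f g
  define xf where "xf i = x $ i" for i
  define y where "y i = (\<Sum>j<n. A $$ (i,j) * xf j)" for i
  have Qxx: "Re (Q xf xf) = 0"
    using z A x unfolding Q_def xf_def by (simp add: scalar_prod_def atLeast0LessThan sum_distrib_left mult.assoc)
  have sym: "Q xf y = cnj (Q y xf)"
  proof -
    have "cnj (Q y xf) = (\<Sum>i<n. \<Sum>j<n. y i * cnj (A $$ (i,j)) * cnj (xf j))"
      unfolding Q_def by simp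
    also have "\<dots> = (\<Sum>i<n. \<Sum>j<n. y i * A $$ (j,i) * cnj (xf j))"
      by (intro sum.cong refl) (metis herm lessThan_iff)
    also have "\<dots> = (\<Sum>j<n. \<Sum>i<n. y i * A $$ (j,i) * cnj (xf j))"
      by (rule sum.swap)
    also have "\<dots> = Q xf y" unfolding Q_def
      by (intro sum.cong refl) (simp add: algebra_simps)
    finally show ?thesis by simp
  qed
  have expand: "Q (\<lambda>i. xf i + of_real s * y i) (\<lambda>i. xf i + of_real s * y i)
      = Q xf xf + of_real s * (Q xf y + Q y xf) + of_real (s^2) * Q y y" for s
    unfolding Q_def
    by (simp add: algebra_simps sum.distrib sum_distrib_left power2_eq_square)
  have "\<And>s. (2 * Re (Q y xf)) * s + Re (Q y y) * s^2 \<ge> 0"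
  proof -
    fix s
    have "0 \<le> Re (Q (\<lambda>i. xf i + of_real s * y i) (\<lambda>i. xf i + of_real s * y i))"
      using pos[of "\<lambda>i. xf i + of_real s * y i"] unfolding Q_def by simp
    also have "\<dots> = (2 * Re (Q y xf)) * s + Re (Q y y) * s^2"
      unfolding expand using Qxx sym by simp
    finally show "(2 * Re (Q y xf)) * s + Re (Q y y) * s^2 \<ge> 0" .
  qed
  hence "Re (Q y xf) = 0" using ab_zero by fastforce
  moreover have "Q y xf = (\<Sum>i<n. of_real ((cmod (y i))^2))"
  proof -
    have "Q y xf = (\<Sum>i<n. cnj (y i) * y i)"
      unfolding Q_def by (simp add: y_def sum_distrib_left mult.assoc)
    also have "\<dots> = (\<Sum>i<n. of_real ((cmod (y i))^2))"
      by (intro sum.cong refl) (metis complex_norm_square mult.commute)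
    finally show ?thesis .
  qed
  ultimately have "(\<Sum>i<n. (cmod (y i))^2) = 0" by simp
  hence "\<forall>i\<in>{..<n}. (cmod (y i))^2 = 0"
    by (subst sum_nonneg_eq_0_iff[symmetric]) auto
  hence "\<And>i. i < n \<Longrightarrow> y i = 0" by auto
  thus ?thesis using A x unfolding y_def xf_def
    by (intro eq_vecI) (auto simp: scalar_prod_def atLeast0LessThan)
qed

lemma adj_carrier: "B \<in> carrier_mat p q \<Longrightarrow> mat_adjoint B \<in> carrier_mat q p"
  unfolding mat_adjoint_def by auto

lemma adj_idx: "B \<in> carrier_mat p q \<Longrightarrow> i < q \<Longrightarrow> j < p \<Longrightarrow> mat_adjoint B $$ (i,j) = cnj (B $$ (j,i))"
  unfolding mat_adjoint_def by (simp add: mat_of_rows_index)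

lemma zero_app: "(0\<^sub>v (p+q) :: 'a::zero vec) = 0\<^sub>v p @\<^sub>v 0\<^sub>v q"
  by (intro eq_vecI) auto

lemma kernel_char:
  fixes A B C :: "complex mat"
  assumes A: "A \<in> carrier_mat p p" and C: "C \<in> carrier_mat q q" and B: "B \<in> carrier_mat p q"
    and PA: "psd_mat A" and PC: "psd_mat C"
  shows "v \<in> mat_kernel (saddle_mat A B C) \<longleftrightarrow> v \<in> carrier_vec (p+q) \<and>
    A *\<^sub>v vec_first v p = 0\<^sub>v p \<and> C *\<^sub>v vec_last v q = 0\<^sub>v q \<and>
    B *\<^sub>v vec_last v q = 0\<^sub>v p \<and> mat_adjoint B *\<^sub>v vec_first v p = 0\<^sub>v q"
proof -
  have aB: "mat_adjoint B \<in> carrier_mat q p" using adj_carrier[OF B] .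
  have mC: "- C \<in> carrier_mat q q" using C by simp
  have H: "saddle_mat A B C \<in> carrier_mat (p+q) (p+q)"
    unfolding saddle_mat_def using four_block_carrier_mat[OF A mC] by simp
  show ?thesis
  proof (cases "v \<in> carrier_vec (p+q)")
    case False thus ?thesis using H unfolding mat_kernel_def by auto
  next
    case True
    define x where "x = vec_first v p"
    define y where "y = vec_last v q"
    have x: "x \<in> carrier_vec p" and y: "y \<in> carrier_vec q" unfolding x_def y_def by auto
    have v: "v = x @\<^sub>v y" unfolding x_def y_def using True by simp
    have Hv: "saddle_mat A B C *\<^sub>v v = (A *\<^sub>v x + B *\<^sub>v y) @\<^sub>v (mat_adjoint B *\<^sub>v x + (- C) *\<^sub>v y)"
      unfolding v saddle_mat_def by (rule four_block_mat_mult_vec[OF A B aB mC x y])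
    have "v \<in> mat_kernel (saddle_mat A B C) \<longleftrightarrow>
        A *\<^sub>v x + B *\<^sub>v y = 0\<^sub>v p \<and> mat_adjoint B *\<^sub>v x + (- C) *\<^sub>v y = 0\<^sub>v q"
    proof -
      have dH: "dim_row (saddle_mat A B C) = p+q" "dim_col (saddle_mat A B C) = p+q" using H by auto
      have c1: "A *\<^sub>v x + B *\<^sub>v y \<in> carrier_vec p" using A B x y by auto
      show ?thesis unfolding mat_kernel_def dH Hv zero_app using True
        by (simp add: Hv append_vec_eq[OF c1 zero_carrier_vec])
    qed
    also have "\<dots> \<longleftrightarrow> A *\<^sub>v x = 0\<^sub>v p \<and> C *\<^sub>v y = 0\<^sub>v q \<and>
        B *\<^sub>v y = 0\<^sub>v p \<and> mat_adjoint B *\<^sub>v x = 0\<^sub>v q" (is "?L \<longleftrightarrow> ?R")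
    proof
      assume ?R thus ?L using A B C x y aB by (auto intro!: eq_vecI simp: scalar_prod_def)
    next
      assume L: ?L
      have e1: "\<And>i. i < p \<Longrightarrow> (A *\<^sub>v x) $ i + (B *\<^sub>v y) $ i = 0"
      proof -
        fix i assume i: "i < p"
        have "(A *\<^sub>v x + B *\<^sub>v y) $ i = 0" using L i by simp
        thus "(A *\<^sub>v x) $ i + (B *\<^sub>v y) $ i = 0" using i A B by simp
      qed
      have e2: "\<And>i. i < q \<Longrightarrow> (mat_adjoint B *\<^sub>v x) $ i = (C *\<^sub>v y) $ i"
      proof -
        fix i assume i: "i < q"
        have "(mat_adjoint B *\<^sub>v x + (- C) *\<^sub>v y) $ i = 0" using L i by simp
        moreover have "((- C) *\<^sub>v y) $ i = - (C *\<^sub>v y) $ i"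
          using i C y by (simp add: scalar_prod_def atLeast0LessThan cnj_sum sum_negf)
        ultimately show "(mat_adjoint B *\<^sub>v x) $ i = (C *\<^sub>v y) $ i" using i aB C by simp
      qed
      define S1 where "S1 = (\<Sum>i<p. cnj (x $ i) * (A *\<^sub>v x) $ i)"
      define S2 where "S2 = (\<Sum>i<p. cnj (x $ i) * (B *\<^sub>v y) $ i)"
      define S3 where "S3 = (\<Sum>i<q. cnj (y $ i) * (mat_adjoint B *\<^sub>v x) $ i)"
      define S4 where "S4 = (\<Sum>i<q. cnj (y $ i) * (C *\<^sub>v y) $ i)"
      have "S1 + S2 = (\<Sum>i<p. cnj (x $ i) * ((A *\<^sub>v x) $ i + (B *\<^sub>v y) $ i))"
        unfolding S1_def S2_def by (simp add: sum.distrib algebra_simps)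
      also have "\<dots> = 0" using e1 by simp
      finally have s12: "S1 + S2 = 0" .
      have s34: "S3 = S4" unfolding S3_def S4_def using e2 by simp
      have "cnj S2 = (\<Sum>i<p. \<Sum>j<q. x $ i * cnj (B $$ (i,j)) * cnj (y $ j))"
        unfolding S2_def using B y by (simp add: scalar_prod_def atLeast0LessThan cnj_sum sum_distrib_left mult.assoc)
      also have "\<dots> = (\<Sum>j<q. \<Sum>i<p. x $ i * cnj (B $$ (i,j)) * cnj (y $ j))"
        by (rule sum.swap)
      also have "\<dots> = S3"
        unfolding S3_def using aB x B
        by (auto simp: scalar_prod_def atLeast0LessThan cnj_sum adj_idx sum_distrib_left algebra_simps intro!: sum.cong)
      finally have s23: "cnj S2 = S3" .
      have r: "Re S1 + Re S4 = 0"
      proof -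
        have "Re S1 + Re S2 = 0" using arg_cong[OF s12, of Re] by simp
        moreover have "Re S2 = Re S4" using arg_cong[OF s23, of Re] s34 by simp
        ultimately show ?thesis by simp
      qed
      have dA: "dim_row A = p" and dC: "dim_row C = q" using A C by auto
      have g1: "Re S1 \<ge> 0" using PA x unfolding psd_mat_def dA S1_def by blast
      have g4: "Re S4 \<ge> 0" using PC y unfolding psd_mat_def dC S4_def by blast
      have z1: "A *\<^sub>v x = 0\<^sub>v p" using psd_null[OF A PA x] r g1 g4 unfolding S1_def by simp
      have z4: "C *\<^sub>v y = 0\<^sub>v q" using psd_null[OF C PC y] r g1 g4 unfolding S4_def by simp
      have z2: "B *\<^sub>v y = 0\<^sub>v p"
      proof (intro eq_vecI)
        fix i assume "i < dim_vec (0\<^sub>v p :: complex vec)"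
        hence i: "i < p" by simp
        show "(B *\<^sub>v y) $ i = 0\<^sub>v p $ i" using e1[OF i] z1 i
          by (metis add_0 index_zero_vec(1))
      qed (use B in simp)
      have z3: "mat_adjoint B *\<^sub>v x = 0\<^sub>v q"
      proof (intro eq_vecI)
        fix i assume "i < dim_vec (0\<^sub>v q :: complex vec)"
        hence i: "i < q" by simp
        show "(mat_adjoint B *\<^sub>v x) $ i = 0\<^sub>v q $ i" using e2[OF i] z4 i by simp
      qed (use aB in simp)
      show ?R using z1 z2 z3 z4 by simp
    qed
    finally show ?thesis using True unfolding x_def y_def by simp
  qed
qed

lemma smult_mv_idx:
  assumes "M \<in> carrier_mat n m" "x \<in> carrier_vec m" "i < n"
  shows "((c \<cdot>\<^sub>m M) *\<^sub>v x) $ i = c * (M *\<^sub>v x) $ i"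
  using assms by (simp add: scalar_prod_def sum_distrib_left mult.assoc)

lemma smult_kernel:
  fixes c :: complex
  assumes "c \<noteq> 0" "M \<in> carrier_mat n m" "x \<in> carrier_vec m"
  shows "(c \<cdot>\<^sub>m M) *\<^sub>v x = 0\<^sub>v n \<longleftrightarrow> M *\<^sub>v x = 0\<^sub>v n"
proof
  assume h: "(c \<cdot>\<^sub>m M) *\<^sub>v x = 0\<^sub>v n"
  show "M *\<^sub>v x = 0\<^sub>v n"
  proof (intro eq_vecI)
    fix i assume "i < dim_vec (0\<^sub>v n :: complex vec)"
    hence i: "i < n" by simp
    have "c * (M *\<^sub>v x) $ i = 0" using h smult_mv_idx[OF assms(2,3) i, of c]
      by (metis i index_zero_vec(1))
    thus "(M *\<^sub>v x) $ i = 0\<^sub>v n $ i" using assms(1) i by simp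
  qed (use assms in simp)
next
  assume h: "M *\<^sub>v x = 0\<^sub>v n"
  show "(c \<cdot>\<^sub>m M) *\<^sub>v x = 0\<^sub>v n"
  proof (intro eq_vecI)
    fix i assume "i < dim_vec (0\<^sub>v n :: complex vec)"
    hence i: "i < n" by simp
    show "((c \<cdot>\<^sub>m M) *\<^sub>v x) $ i = 0\<^sub>v n $ i" using h smult_mv_idx[OF assms(2,3) i, of c] i
      by simp
  qed (use assms in simp)
qed

lemma psd_smult:
  assumes A: "A \<in> carrier_mat n n" and P: "psd_mat A" and t: "t > 0"
  shows "psd_mat (complex_of_real t \<cdot>\<^sub>m A)"
proof -
  have hm: "hermitian_mat A" using P unfolding psd_mat_def by blast
  have dA: "dim_row A = n" using A by simp
  have herm: "\<And>i j. i < n \<Longrightarrow> j < n \<Longrightarrow> A $$ (i,j) = cnj (A $$ (j,i))"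
    using hm unfolding hermitian_mat_def dA by blast
  have h2: "hermitian_mat (complex_of_real t \<cdot>\<^sub>m A)"
  proof -
    have "\<forall>i<n. \<forall>j<n. (complex_of_real t \<cdot>\<^sub>m A) $$ (i,j) = cnj ((complex_of_real t \<cdot>\<^sub>m A) $$ (j,i))"
    proof (intro allI impI)
      fix i j assume i: "i < n" and j: "j < n"
      show "(complex_of_real t \<cdot>\<^sub>m A) $$ (i,j) = cnj ((complex_of_real t \<cdot>\<^sub>m A) $$ (j,i))"
        using A i j herm[OF i j] by simp
    qed
    thus ?thesis unfolding hermitian_mat_def using A by simp
  qed
  have "0 \<le> Re (\<Sum>i<n. cnj (v $ i) * ((complex_of_real t \<cdot>\<^sub>m A) *\<^sub>v v) $ i)"
    if v: "v \<in> carrier_vec n" for v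
  proof -
    have "0 \<le> Re (\<Sum>i<n. cnj (v $ i) * (A *\<^sub>v v) $ i)"
      using P v unfolding psd_mat_def dA by blast
    hence "0 \<le> t * Re (\<Sum>i<n. cnj (v $ i) * (A *\<^sub>v v) $ i)" using t by simp
    also have "t * Re (\<Sum>i<n. cnj (v $ i) * (A *\<^sub>v v) $ i) =
        Re (complex_of_real t * (\<Sum>i<n. cnj (v $ i) * (A *\<^sub>v v) $ i))" by simp
    also have "complex_of_real t * (\<Sum>i<n. cnj (v $ i) * (A *\<^sub>v v) $ i) =
        (\<Sum>i<n. cnj (v $ i) * ((complex_of_real t \<cdot>\<^sub>m A) *\<^sub>v v) $ i)"
      unfolding sum_distrib_left
      by (intro sum.cong refl) (simp add: smult_mv_idx[OF A v] algebra_simps)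
    finally show ?thesis .
  qed
  thus ?thesis using h2 A unfolding psd_mat_def by simp
qed

lemma adj_smult:
  assumes B: "B \<in> carrier_mat p q"
  shows "mat_adjoint (c \<cdot>\<^sub>m B) = cnj c \<cdot>\<^sub>m mat_adjoint B"
proof -
  have B': "c \<cdot>\<^sub>m B \<in> carrier_mat p q" using B by simp
  show ?thesis
    using adj_carrier[OF B] adj_carrier[OF B'] adj_idx[OF B] adj_idx[OF B'] B
    by (intro eq_matI) auto
qed

theorem corollary2p3:
  fixes A B C :: "complex mat" and p q :: nat and t :: real
  assumes "A \<in> carrier_mat p p" and "C \<in> carrier_mat q q" and "B \<in> carrier_mat p q"
    and "psd_mat A" and "psd_mat C" and "t > 0"
  shows "mat_kernel (saddle_mat (complex_of_real t \<cdot>\<^sub>m A) B C) = mat_kernel (saddle_mat A B C) \<and>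
         mat_kernel (saddle_mat A (complex_of_real t \<cdot>\<^sub>m B) C) = mat_kernel (saddle_mat A B C) \<and>
         mat_kernel (saddle_mat A B (complex_of_real t \<cdot>\<^sub>m C)) = mat_kernel (saddle_mat A B C)"
proof -
  note A = assms(1) and C = assms(2) and B = assms(3) and PA = assms(4) and PC = assms(5)
  have c0: "complex_of_real t \<noteq> 0" using assms(6) by simp
  have tA: "complex_of_real t \<cdot>\<^sub>m A \<in> carrier_mat p p" using A by simp
  have tB: "complex_of_real t \<cdot>\<^sub>m B \<in> carrier_mat p q" using B by simp
  have tC: "complex_of_real t \<cdot>\<^sub>m C \<in> carrier_mat q q" using C by simp
  have pA: "psd_mat (complex_of_real t \<cdot>\<^sub>m A)" by (rule psd_smult[OF A PA assms(6)])
  have pC: "psd_mat (complex_of_real t \<cdot>\<^sub>m C)" by (rule psd_smult[OF C PC assms(6)])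
  have aB: "mat_adjoint B \<in> carrier_mat q p" by (rule adj_carrier[OF B])
  have adj: "mat_adjoint (complex_of_real t \<cdot>\<^sub>m B) = complex_of_real t \<cdot>\<^sub>m mat_adjoint B"
    using adj_smult[OF B] by simp
  have k1: "v \<in> mat_kernel (saddle_mat (complex_of_real t \<cdot>\<^sub>m A) B C) \<longleftrightarrow> v \<in> mat_kernel (saddle_mat A B C)" for v
    unfolding kernel_char[OF tA C B pA PC] kernel_char[OF A C B PA PC]
    using smult_kernel[OF c0 A, of "vec_first v p"] by auto
  have k2: "v \<in> mat_kernel (saddle_mat A (complex_of_real t \<cdot>\<^sub>m B) C) \<longleftrightarrow> v \<in> mat_kernel (saddle_mat A B C)" for v
    unfolding kernel_char[OF A C tB PA PC] kernel_char[OF A C B PA PC] adj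
    using smult_kernel[OF c0 B, of "vec_last v q"] smult_kernel[OF c0 aB, of "vec_first v p"] by auto
  have k3: "v \<in> mat_kernel (saddle_mat A B (complex_of_real t \<cdot>\<^sub>m C)) \<longleftrightarrow> v \<in> mat_kernel (saddle_mat A B C)" for v
    unfolding kernel_char[OF A tC B PA pC] kernel_char[OF A C B PA PC]
    using smult_kernel[OF c0 C, of "vec_last v q"] by auto
  show ?thesis using k1 k2 k3 by blast
qed

end
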